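(* Let $A$ be a commutative ring. There is a well-defined group homomorphism $\alpha:\mathrm{St}(2,A)\to C(A)$ with $\alpha(x_{21}(a))=y(a)$ and $\alpha(x_{12}(a))=\bar y(a)$ for all $a\in A$. Furthermore $\psi\circ\alpha=\phi$.
   Context: $C(A)$ is the group with generators $\epsilon(a)$, $a\in A$, and relations: with $h(u):=\epsilon(-u)\epsilon(-u^{-1})\epsilon(-u)$, (1) $h(u)h(v)=h(uv)$ ($u,v\in A^\times$); (2) $\epsilon(a)\epsilon(0)\epsilon(b)=h(-1)\epsilon(a+b)$; (3) $h(u)\epsilon(a)h(u)=\epsilon(u^2a)$. $y(a):=\epsilon(0)^3\epsilon(a)$ and $\bar y(a):=\epsilon(-a)\epsilon(0)^3$. $\psi:C(A)\to\mathrm{SL}_2(A)$ sends $\epsilon(a)\mapsto\begin{pmatrix}a&1\\-1&0\end{pmatrix}$. $\mathrm{St}(2,A)$ is the group generated by $x_{12}(t),x_{21}(t)$, $t\in A$, with relations $x_{ij}(s)x_{ij}(t)=x_{ij}(s+t)$ and $w_{ij}(u)x_{ij}(t)w_{ij}(-u)=x_{ji}(-u^{-2}t)$ for $u\in A^\times$, where $w_{ij}(u)=x_{ij}(u)x_{ji}(-u^{-1})x_{ij}(u)$. $\phi:\mathrm{St}(2,A)\to\mathrm{SL}_2(A)$ sends $x_{12}(t)\mapsto\begin{pmatrix}1&t\\0&1\end{pmatrix}$ and $x_{21}(t)\mapsto\begin{pmatrix}1&0\\t&1\end{pmatrix}$. *)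

theory Defs
  imports "HOL-Algebra.Group"
begin

text \<open>Words in generators and their formal inverses: (g, True) is g, (g, False) is g^-1.
  A presentation is given by a set R of pairs of words (l, r), meaning the relation l = r.\<close>

type_synonym 'g word = "('g \<times> bool) list"

inductive pres_eq :: "('g word \<times> 'g word) set \<Rightarrow> 'g word \<Rightarrow> 'g word \<Rightarrow> bool"
  for R where
  refl: "pres_eq R w w"
| sym: "pres_eq R v w \<Longrightarrow> pres_eq R w v"
| trans: "pres_eq R u v \<Longrightarrow> pres_eq R v w \<Longrightarrow> pres_eq R u w"
| cancel: "pres_eq R (u @ [(g, b), (g, \<not> b)] @ v) (u @ v)"
| rel: "(l, r) \<in> R \<Longrightarrow> pres_eq R (u @ l @ v) (u @ r @ v)"

definition pres_class :: "('g word \<times> 'g word) set \<Rightarrow> 'g word \<Rightarrow> 'g word set" where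
  "pres_class R w = {z. pres_eq R w z}"

definition presented_group :: "('g word \<times> 'g word) set \<Rightarrow> 'g word set monoid" where
  "presented_group R =
     \<lparr>carrier = range (pres_class R),
      mult = (\<lambda>X Y. {z. \<exists>x\<in>X. \<exists>y\<in>Y. pres_eq R (x @ y) z}),
      one = pres_class R []\<rparr>"

definition eval_word :: "('b, 'c) monoid_scheme \<Rightarrow> ('g \<Rightarrow> 'b) \<Rightarrow> 'g word \<Rightarrow> 'b" where
  "eval_word G f w =
     foldr (\<lambda>(g, b) acc. (if b then f g else inv\<^bsub>G\<^esub> (f g)) \<otimes>\<^bsub>G\<^esub> acc) w \<one>\<^bsub>G\<^esub>"

text \<open>The map on a presented group induced by an assignment of generators
  (the homomorphism, when it is well defined).\<close>
definition pres_lift :: "('b, 'c) monoid_scheme \<Rightarrow> ('g \<Rightarrow> 'b) \<Rightarrow> 'g word set \<Rightarrow> 'b" where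
  "pres_lift G f X = eval_word G f (SOME w. w \<in> X)"

definition unit_inv :: "'a::comm_ring_1 \<Rightarrow> 'a" where
  "unit_inv u = (THE v. u * v = 1)"

definition eps :: "'a \<Rightarrow> 'a word" where
  "eps a = [(a, True)]"

definition h_word :: "'a::comm_ring_1 \<Rightarrow> 'a word" where
  "h_word u = eps (- u) @ eps (- unit_inv u) @ eps (- u)"

definition C_rels :: "('a::comm_ring_1 word \<times> 'a word) set" where
  "C_rels =
     {(h_word u @ h_word v, h_word (u * v)) | u v. u dvd 1 \<and> v dvd 1}
   \<union> {(eps a @ eps 0 @ eps b, h_word (-1) @ eps (a + b)) | a b. True}
   \<union> {(h_word u @ eps a @ h_word u, eps (u\<^sup>2 * a)) | u a. u dvd 1}"

definition C_grp :: "'a::comm_ring_1 itself \<Rightarrow> 'a word set monoid" where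
  "C_grp _ = presented_group (C_rels :: ('a word \<times> 'a word) set)"

definition y_elt :: "'a::comm_ring_1 \<Rightarrow> 'a word set" where
  "y_elt a = pres_class C_rels (eps 0 @ eps 0 @ eps 0 @ eps a)"

definition ybar_elt :: "'a::comm_ring_1 \<Rightarrow> 'a word set" where
  "ybar_elt a = pres_class C_rels (eps (- a) @ eps 0 @ eps 0 @ eps 0)"

datatype 'a stgen = X12 'a | X21 'a

text \<open>x_ij(t) for (i,j) = (1,2) when the flag is True, (2,1) when False.\<close>
definition xw :: "bool \<Rightarrow> 'a \<Rightarrow> 'a stgen word" where
  "xw ij t = [(if ij then X12 t else X21 t, True)]"

definition ww :: "bool \<Rightarrow> 'a::comm_ring_1 \<Rightarrow> 'a stgen word" where
  "ww ij u = xw ij u @ xw (\<not> ij) (- unit_inv u) @ xw ij u"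

definition St_rels :: "('a::comm_ring_1 stgen word \<times> 'a stgen word) set" where
  "St_rels =
     {(xw ij s @ xw ij t, xw ij (s + t)) | ij s t. True}
   \<union> {(ww ij u @ xw ij t @ ww ij (- u), xw (\<not> ij) (- (unit_inv u)\<^sup>2 * t)) | ij u t. u dvd 1}"

definition St_grp :: "'a::comm_ring_1 itself \<Rightarrow> 'a stgen word set monoid" where
  "St_grp _ = presented_group (St_rels :: ('a stgen word \<times> 'a stgen word) set)"

text \<open>(a, b, c, d) represents the matrix [[a, b], [c, d]].\<close>
type_synonym 'a mat2 = "'a \<times> 'a \<times> 'a \<times> 'a"

definition mat2_mult :: "'a::comm_ring_1 mat2 \<Rightarrow> 'a mat2 \<Rightarrow> 'a mat2" where
  "mat2_mult M N = (case M of (a, b, c, d) \<Rightarrow> case N of (e, f, g, h) \<Rightarrow>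
     (a * e + b * g, a * f + b * h, c * e + d * g, c * f + d * h))"

definition SL2 :: "'a::comm_ring_1 itself \<Rightarrow> 'a mat2 monoid" where
  "SL2 _ = \<lparr>carrier = {(a, b, c, d). a * d - b * c = 1}, mult = mat2_mult, one = (1, 0, 0, 1)\<rparr>"

definition psi :: "'a::comm_ring_1 word set \<Rightarrow> 'a mat2" where
  "psi = pres_lift (SL2 TYPE('a)) (\<lambda>a. (a, 1, -1, 0))"

definition phi :: "'a::comm_ring_1 stgen word set \<Rightarrow> 'a mat2" where
  "phi = pres_lift (SL2 TYPE('a))
     (\<lambda>g. case g of X12 t \<Rightarrow> (1, t, 0, 1) | X21 t \<Rightarrow> (1, 0, t, 1))"

end

theory Submission
  imports Defs
begin


lemmas [trans] = pres_eq.trans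

lemma pres_eq_refl[simp]: "pres_eq R w w"
  by (rule pres_eq.refl)

lemma pres_eq_ctx: "pres_eq R x y \<Longrightarrow> pres_eq R (p @ x @ q) (p @ y @ q)"
proof (induction rule: pres_eq.induct)
  case (refl w) show ?case by (rule pres_eq.refl)
next
  case (sym v w) from sym.IH show ?case by (rule pres_eq.sym)
next
  case (trans u v w) from trans.IH show ?case by (blast intro: pres_eq.trans)
next
  case (cancel u g b v)
  have "pres_eq R ((p@u) @ [(g, b), (g, \<not> b)] @ (v@q)) ((p@u) @ (v@q))" by (rule pres_eq.cancel)
  thus ?case by simp
next
  case (rel l r u v)
  have "pres_eq R ((p@u) @ l @ (v@q)) ((p@u) @ r @ (v@q))" by (rule pres_eq.rel[OF rel])
  thus ?case by simp
qed

lemma pres_eq_ctxL: "pres_eq R x y \<Longrightarrow> pres_eq R (p @ x) (p @ y)"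
  using pres_eq_ctx[of R x y p "[]"] by simp

lemma pres_eq_ctxR: "pres_eq R x y \<Longrightarrow> pres_eq R (x @ q) (y @ q)"
  using pres_eq_ctx[of R x y "[]" q] by simp

lemma pres_eq_app: "pres_eq R a a' \<Longrightarrow> pres_eq R b b' \<Longrightarrow> pres_eq R (a@b) (a'@b')"
  by (meson pres_eq.trans pres_eq_ctxL pres_eq_ctxR)

definition winv :: "'g word \<Rightarrow> 'g word" where
  "winv w = rev (map (\<lambda>(g,b). (g, \<not> b)) w)"

lemma winv_winv[simp]: "winv (winv w) = w"
  by (simp add: winv_def rev_map case_prod_unfold comp_def)

lemma winv_r: "pres_eq R (w @ winv w) []"
proof (induction w)
  case Nil thus ?case by (simp add: winv_def pres_eq.refl)
next
  case (Cons x w)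
  obtain g b where x: "x = (g,b)" by force
  have "pres_eq R ([(g,b)] @ (w @ winv w) @ [(g,\<not>b)]) ([(g,b)] @ [] @ [(g,\<not>b)])"
    by (rule pres_eq_ctx[OF Cons])
  also have "pres_eq R ([(g,b)] @ [] @ [(g,\<not>b)]) []" using pres_eq.cancel[of R "[]" g b "[]"] by simp
  finally show ?case by (simp add: x winv_def)
qed

lemma winv_l: "pres_eq R (winv w @ w) []"
  using winv_r[of R "winv w"] by simp

lemma cancel_left: "pres_eq R (x@a) (x@b) \<Longrightarrow> pres_eq R a b"
proof -
  assume h: "pres_eq R (x@a) (x@b)"
  have "pres_eq R a (winv x @ x @ a)"
    using pres_eq_ctxR[OF winv_l[of R x], of a] by (simp add: pres_eq.sym)
  also have "pres_eq R (winv x @ x @ a) (winv x @ x @ b)" using pres_eq_ctxL[OF h] by simp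
  also have "pres_eq R (winv x @ x @ b) b"
    using pres_eq_ctxR[OF winv_l[of R x], of b] by simp
  finally show ?thesis .
qed

lemma cancel_right: "pres_eq R (a@x) (b@x) \<Longrightarrow> pres_eq R a b"
proof -
  assume h: "pres_eq R (a@x) (b@x)"
  have "pres_eq R a (a @ x @ winv x)"
    using pres_eq_ctxL[OF winv_r[of R x], of a] by (simp add: pres_eq.sym)
  also have "pres_eq R (a @ x @ winv x) (b @ x @ winv x)" using pres_eq_ctxR[OF h] by simp
  also have "pres_eq R (b @ x @ winv x) b"
    using pres_eq_ctxL[OF winv_r[of R x], of b] by simp
  finally show ?thesis .
qed

lemma class_eq: "pres_class R x = pres_class R y \<longleftrightarrow> pres_eq R x y"
proof
  assume "pres_class R x = pres_class R y"
  hence "y \<in> pres_class R x" by (simp add: pres_class_def pres_eq.refl)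
  thus "pres_eq R x y" by (simp add: pres_class_def)
next
  assume h: "pres_eq R x y"
  show "pres_class R x = pres_class R y"
    unfolding pres_class_def using h by (blast intro: pres_eq.trans pres_eq.sym)
qed

lemma pg_mult: "mult (presented_group R) (pres_class R x) (pres_class R y) = pres_class R (x@y)"
  unfolding presented_group_def pres_class_def
  by (auto intro: pres_eq.refl pres_eq.trans pres_eq_app pres_eq.sym)

lemma pg_carrier: "carrier (presented_group R) = range (pres_class R)"
  by (simp add: presented_group_def)

lemma pg_one: "one (presented_group R) = pres_class R []"
  by (simp add: presented_group_def)

lemma group_pg: "group (presented_group R)"
proof (rule groupI)
  fix X Y assume "X \<in> carrier (presented_group R)" "Y \<in> carrier (presented_group R)"
  then obtain x y where "X = pres_class R x" "Y = pres_class R y" by (auto simp: pg_carrier)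
  thus "X \<otimes>\<^bsub>presented_group R\<^esub> Y \<in> carrier (presented_group R)" by (simp add: pg_mult pg_carrier)
next
  show "\<one>\<^bsub>presented_group R\<^esub> \<in> carrier (presented_group R)" by (simp add: pg_one pg_carrier)
next
  fix X Y Z assume "X \<in> carrier (presented_group R)" "Y \<in> carrier (presented_group R)"
    "Z \<in> carrier (presented_group R)"
  then obtain x y z where "X = pres_class R x" "Y = pres_class R y" "Z = pres_class R z"
    by (auto simp: pg_carrier)
  thus "X \<otimes>\<^bsub>presented_group R\<^esub> Y \<otimes>\<^bsub>presented_group R\<^esub> Z =
        X \<otimes>\<^bsub>presented_group R\<^esub> (Y \<otimes>\<^bsub>presented_group R\<^esub> Z)" by (simp add: pg_mult)
next
  fix X assume "X \<in> carrier (presented_group R)"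
  then obtain x where "X = pres_class R x" by (auto simp: pg_carrier)
  thus "\<one>\<^bsub>presented_group R\<^esub> \<otimes>\<^bsub>presented_group R\<^esub> X = X" by (simp add: pg_mult pg_one)
next
  fix X assume "X \<in> carrier (presented_group R)"
  then obtain x where X: "X = pres_class R x" by (auto simp: pg_carrier)
  have "pres_class R (winv x) \<otimes>\<^bsub>presented_group R\<^esub> X = \<one>\<^bsub>presented_group R\<^esub>"
    by (simp add: X pg_mult pg_one class_eq winv_l)
  thus "\<exists>Y\<in>carrier (presented_group R). Y \<otimes>\<^bsub>presented_group R\<^esub> X = \<one>\<^bsub>presented_group R\<^esub>"
    by (auto simp: pg_carrier)
qed

lemma eval_word_Nil[simp]: "eval_word G f [] = \<one>\<^bsub>G\<^esub>"
  by (simp add: eval_word_def)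

lemma eval_word_Cons[simp]: "eval_word G f ((g,b) # w) =
   (if b then f g else inv\<^bsub>G\<^esub> (f g)) \<otimes>\<^bsub>G\<^esub> eval_word G f w"
  by (simp add: eval_word_def)

lemma eval_word_closed:
  assumes "group G" "\<And>g. f g \<in> carrier G"
  shows "eval_word G f w \<in> carrier G"
proof (induction w)
  case Nil thus ?case using group.is_monoid[OF assms(1)] by (simp add: monoid.one_closed)
next
  case (Cons x w) thus ?case using assms
    by (cases x) (auto intro!: monoid.m_closed[OF group.is_monoid[OF assms(1)]] group.inv_closed)
qed

lemma eval_word_append:
  assumes "group G" "\<And>g. f g \<in> carrier G"
  shows "eval_word G f (a @ b) = eval_word G f a \<otimes>\<^bsub>G\<^esub> eval_word G f b"
proof (induction a)
  case Nil thus ?case using assms eval_word_closed[of G f, OF assms]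
    by (simp add: monoid.l_one[OF group.is_monoid[OF assms(1)]])
next
  case (Cons x a)
  interpret group G by fact
  show ?case using Cons assms eval_word_closed[of G f, OF assms]
    by (cases x) (simp add: m_assoc)
qed

lemma eval_word_resp:
  assumes G: "group G" and f: "\<And>g. f g \<in> carrier G"
    and R: "\<And>l r. (l, r) \<in> R \<Longrightarrow> eval_word G f l = eval_word G f r"
  shows "pres_eq R x y \<Longrightarrow> eval_word G f x = eval_word G f y"
proof (induction rule: pres_eq.induct)
  case (cancel u g b v)
  interpret group G by fact
  have c: "eval_word G f [(g, b), (g, \<not> b)] = \<one>\<^bsub>G\<^esub>" using f by auto
  show ?case
    using eval_word_closed[of G f, OF G f]
    by (simp only: eval_word_append[OF G f] c) (simp add: m_assoc)
next
  case (rel l r u v)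
  interpret group G by fact
  show ?case by (simp add: eval_word_append[OF G f] R[OF rel])
qed auto

lemma pres_lift_class:
  assumes G: "group G" and f: "\<And>g. f g \<in> carrier G"
    and R: "\<And>l r. (l, r) \<in> R \<Longrightarrow> eval_word G f l = eval_word G f r"
  shows "pres_lift G f (pres_class R w) = eval_word G f w"
proof -
  have "(SOME z. z \<in> pres_class R w) \<in> pres_class R w"
    by (rule someI[of _ w]) (simp add: pres_class_def pres_eq.refl)
  hence "pres_eq R w (SOME z. z \<in> pres_class R w)" by (simp add: pres_class_def)
  thus ?thesis unfolding pres_lift_def using eval_word_resp[OF G f R] by metis
qed

lemma pres_lift_hom:
  assumes G: "group G" and f: "\<And>g. f g \<in> carrier G"
    and R: "\<And>l r. (l, r) \<in> R \<Longrightarrow> eval_word G f l = eval_word G f r"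
  shows "pres_lift G f \<in> hom (presented_group R) G"
  unfolding hom_def
  by (auto simp: pg_carrier pg_mult pres_lift_class[OF G f R] eval_word_closed[of G f, OF G f]
       eval_word_append[OF G f])

lemma hom_eval:
  assumes "group_hom G H h" "\<And>g. f g \<in> carrier G"
  shows "h (eval_word G f w) = eval_word H (h \<circ> f) w"
proof (induction w)
  case Nil thus ?case using assms(1) by (simp add: group_hom.hom_one)
next
  case (Cons x w)
  interpret group_hom G H h by fact
  show ?case using Cons assms(2) eval_word_closed[of G f, OF G.group_axioms assms(2)]
    by (cases x) simp
qed



abbreviation E :: "'a \<Rightarrow> 'a \<times> bool" where "E a \<equiv> (a, True)"

abbreviation ceq :: "'a::comm_ring_1 word \<Rightarrow> 'a word \<Rightarrow> bool" where
  "ceq \<equiv> pres_eq C_rels"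

lemma unit_inv_unique: "(u::'a::comm_ring_1) * v = 1 \<Longrightarrow> unit_inv u = v"
  unfolding unit_inv_def
proof (rule the_equality)
  fix w assume a: "u * v = 1" "u * w = 1"
  have "w = (u*v)*w" using a by simp
  also have "\<dots> = v*(u*w)" by (simp add: ac_simps)
  finally show "w = v" using a by simp
qed

lemma unit_inv: "(u::'a::comm_ring_1) dvd 1 \<Longrightarrow> u * unit_inv u = 1"
  by (metis dvdE unit_inv_unique)

lemma rel_base: "(l, r) \<in> R \<Longrightarrow> pres_eq R l r"
  using pres_eq.rel[of l r R "[]" "[]"] by simp

lemma R1: "(u::'a::comm_ring_1) dvd 1 \<Longrightarrow> v dvd 1 \<Longrightarrow> ceq (h_word u @ h_word v) (h_word (u*v))"
  by (rule rel_base) (auto simp: C_rels_def)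

lemma R2: "ceq [E (a::'a::comm_ring_1), E 0, E b] ([E 1, E 1, E 1] @ [E (a+b)])"
proof -
  have "unit_inv (-1::'a) = -1" by (rule unit_inv_unique) simp
  hence "h_word (-1::'a) = [E 1, E 1, E 1]" by (simp add: h_word_def eps_def)
  moreover have "ceq (eps a @ eps 0 @ eps b) (h_word (-1) @ eps (a + b))"
    by (rule rel_base) (auto simp: C_rels_def)
  ultimately show ?thesis by (simp add: eps_def)
qed

lemma R3: "(u::'a::comm_ring_1) dvd 1 \<Longrightarrow> ceq (h_word u @ [E a] @ h_word u) [E (u^2 * a)]"
  using rel_base[of "h_word u @ eps a @ h_word u" "eps (u^2*a)" C_rels]
  by (auto simp: C_rels_def eps_def)

lemma hw: "(u::'a::comm_ring_1) * v = 1 \<Longrightarrow> h_word u = [E (-u), E (-v), E (-u)]"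
  by (simp add: h_word_def eps_def unit_inv_unique)

lemma hw1: "h_word (1::'a::comm_ring_1) = [E (-1), E (-1), E (-1)]"
  using hw[of 1 1] by simp

lemma hwm1: "h_word (-1::'a::comm_ring_1) = [E 1, E 1, E 1]"
  using hw[of "-1" "-1"] by simp

lemma D1: "ceq (h_word (1::'a::comm_ring_1)) []"
proof -
  have "ceq (h_word (1::'a) @ h_word 1) (h_word 1 @ [])" using R1[of "1::'a" 1] by simp
  thus ?thesis by (rule cancel_left)
qed

lemma D2: "ceq ([E 1, E 1, E 1] @ [E 1, E 1, E (1::'a::comm_ring_1)]) []"
proof -
  have "ceq (h_word (-1::'a) @ h_word (-1)) (h_word 1)" using R1[of "-1::'a" "-1"] by simp
  also have "ceq (h_word (1::'a)) []" by (rule D1)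
  finally show ?thesis by (simp add: hwm1)
qed

lemma D3: "ceq ([E 1, E 1, E 1] @ [E a] @ [E 1, E 1, E (1::'a::comm_ring_1)]) [E a]"
  using R3[of "-1::'a" a] by (simp add: hwm1)

lemma D4: "ceq ([E 1, E 1, E (1::'a::comm_ring_1)] @ [x]) ([x] @ [E 1, E 1, E 1])" if "snd x"
proof -
  obtain a b where "x = (a,b)" by force
  with that have x: "x = E a" by simp
  have "ceq ([E 1, E 1, E (1::'a)] @ [E a]) (([E 1, E 1, E 1] @ [E a]) @ ([E 1, E 1, E 1] @ [E 1, E 1, E 1]))"
    using pres_eq_ctxL[OF D2[where 'a='a], of "[E 1, E 1, E 1] @ [E a]"] by (simp add: pres_eq.sym)
  also have "ceq (([E 1, E 1, E 1] @ [E a]) @ ([E 1, E 1, E 1] @ [E 1, E 1, E (1::'a)]))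
    (([E 1, E 1, E 1] @ [E a] @ [E 1, E 1, E 1]) @ [E 1, E 1, E 1])" by simp
  also have "ceq (([E 1, E 1, E 1] @ [E a] @ [E 1, E 1, E 1]) @ [E 1, E 1, E (1::'a)]) ([E a] @ [E 1, E 1, E 1])"
    by (rule pres_eq_ctxR[OF D3])
  finally show ?thesis by (simp add: x)
qed

lemma D4w: "(\<forall>x\<in>set w. snd x) \<Longrightarrow> ceq ([E 1, E 1, E (1::'a::comm_ring_1)] @ w) (w @ [E 1, E 1, E 1])"
proof (induction w)
  case Nil thus ?case by (simp add: pres_eq.refl)
next
  case (Cons x w)
  have "ceq ([E 1, E 1, E (1::'a)] @ [x] @ w) (([x] @ [E 1, E 1, E 1]) @ w)"
    using pres_eq_ctxR[OF D4[of x], of w] Cons by simp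
  also have "ceq (([x] @ [E 1, E 1, E (1::'a)]) @ w) ([x] @ (w @ [E 1, E 1, E 1]))"
    using pres_eq_ctxL[OF Cons.IH, of "[x]"] Cons by simp
  finally show ?case by simp
qed

lemma D4w': "(\<forall>x\<in>set w. snd x) \<Longrightarrow> ceq (w @ [E 1, E 1, E (1::'a::comm_ring_1)]) ([E 1, E 1, E 1] @ w)"
  by (rule pres_eq.sym, rule D4w)

lemma D5: "ceq [E 0, E (0::'a::comm_ring_1)] [E 1, E 1, E 1]"
proof -
  have "ceq ([E 0, E (0::'a)] @ [E 0]) ([E 1, E 1, E 1] @ [E 0])" using R2[of "0::'a" 0] by simp
  thus ?thesis by (rule cancel_right)
qed

lemma K: "ceq ([E a] @ [E 1, E 1, E 1] @ [E 0, E b]) [E (a + b::'a::comm_ring_1)]"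
proof -
  have "ceq ([E a] @ [E 1, E 1, E 1] @ [E 0, E (b::'a)]) ([E 1, E 1, E 1] @ [E a] @ [E 0, E b])"
    using pres_eq_ctxR[OF D4w'[of "[E a]"], of "[E 0, E b]"] by simp
  also have "ceq ([E 1, E 1, E 1] @ [E a] @ [E 0, E (b::'a)]) ([E 1, E 1, E 1] @ [E 1, E 1, E 1] @ [E (a+b)])"
    using pres_eq_ctxL[OF R2[of a b], of "[E 1, E 1, E 1]"] by simp
  also have "ceq ([E 1, E 1, E 1] @ [E 1, E 1, E 1] @ [E (a+b::'a)]) [E (a+b)]"
    using pres_eq_ctxR[OF D2[where 'a='a], of "[E (a+b)]"] by simp
  finally show ?thesis .
qed

lemma D6: "ceq [E 0, E 0, E 0, E (0::'a::comm_ring_1)] []"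
proof -
  have "ceq ([E 0, E 0] @ [E 0, E (0::'a)]) ([E 1, E 1, E 1] @ [E 1, E 1, E 1])"
    by (rule pres_eq_app[OF D5 D5])
  also have "ceq ([E 1, E 1, E 1] @ [E 1, E 1, E (1::'a)]) []" by (rule D2)
  finally show ?thesis by simp
qed


abbreviation Zw :: "'a::comm_ring_1 word" where "Zw \<equiv> [E 1, E 1, E 1]"
abbreviation Yw :: "'a::comm_ring_1 \<Rightarrow> 'a word" where "Yw a \<equiv> [E 0, E 0, E 0, E a]"
abbreviation Ybw :: "'a::comm_ring_1 \<Rightarrow> 'a word" where "Ybw a \<equiv> [E (-a), E 0, E 0, E 0]"

lemma Kinv: "x + a + y = c \<Longrightarrow> ceq ([E x] @ Zw @ [E 0, E a] @ Zw @ [E 0, E y]) [E (c::'a::comm_ring_1)]"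
proof -
  assume c: "x + a + y = c"
  have "ceq (([E x] @ Zw @ [E 0, E a]) @ Zw @ [E 0, E y]) ([E (x+a::'a)] @ Zw @ [E 0, E y])"
    by (rule pres_eq_ctxR[OF K])
  also have "ceq ([E (x+a::'a)] @ Zw @ [E 0, E y]) [E (x+a+y)]" by (rule K)
  finally show ?thesis using c by simp
qed

lemma T1: "s + t = c \<Longrightarrow> ceq (Yw s @ Yw t) (Yw (c::'a::comm_ring_1))"
proof -
  assume c: "s + t = c"
  have "ceq ([E 0, E 0, E 0] @ ([E s] @ [E 0, E 0] @ [E 0, E t]) @ []) ([E 0, E 0, E 0] @ ([E s] @ Zw @ [E 0, E t]) @ ([]::'a word))"
    by (rule pres_eq_ctx[OF pres_eq_ctx[OF D5]])
  also have "ceq ([E 0, E 0, E 0] @ ([E s] @ Zw @ [E 0, E t]) @ ([]::'a word)) ([E 0, E 0, E 0] @ [E (s+t)] @ [])"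
    by (rule pres_eq_ctx[OF K])
  finally show ?thesis using c by simp
qed

lemma T2: "s + t = c \<Longrightarrow> ceq (Ybw s @ Ybw t) (Ybw (c::'a::comm_ring_1))"
proof -
  assume c: "s + t = c"
  have "ceq ([] @ ([E (-s)] @ [E 0, E 0] @ [E 0, E (-t)]) @ [E 0, E 0, E 0]) ([] @ ([E (-s)] @ Zw @ [E 0, E (-t)]) @ [E 0, E 0, (E 0::'a \<times> bool)])"
    by (rule pres_eq_ctx[OF pres_eq_ctx[OF D5]])
  also have "ceq ([] @ ([E (-s)] @ Zw @ [E 0, E (-t)]) @ [E 0, E 0, (E 0::'a \<times> bool)]) ([] @ [E (-s + -t)] @ [E 0, E 0, E 0])"
    by (rule pres_eq_ctx[OF K])
  finally show ?thesis unfolding c[symmetric] by (simp add: algebra_simps)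
qed

lemma units_of: "(u::'a::comm_ring_1) * v = 1 \<Longrightarrow> u dvd 1 \<and> v dvd 1"
  by (metis dvd_triv_left dvd_triv_right)

lemma HC: assumes uv: "(u::'a::comm_ring_1) * v = 1"
  shows "ceq [E (-u), E (-v), E (-u), E 0, E a, E 0, E (-u), E (-v), E (-u)] [E 0, E (v^2*a), E 0]"
proof -
  have un: "u dvd 1" "v dvd 1" using units_of[OF uv] by auto
  have hu: "h_word u = [E (-u), E (-v), E (-u)]" by (rule hw[OF uv])
  have hv: "h_word v = [E (-v), E (-u), E (-v)]" by (rule hw) (simp add: uv mult.commute)
  have i1: "ceq (h_word u @ h_word v) []" using R1[OF un] D1 uv by (metis pres_eq.trans)
  have i2: "ceq (h_word v @ h_word u) []" using R1[OF un(2) un(1)] D1 uv by (metis pres_eq.trans mult.commute)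
  have "ceq ((h_word u @ [E 0]) @ [] @ ([E a, E 0] @ h_word u)) ((h_word u @ [E 0]) @ (h_word u @ h_word v) @ ([E a, E 0] @ h_word u))"
    by (rule pres_eq_ctx[OF pres_eq.sym[OF i1]])
  also have "ceq ((h_word u @ [E 0]) @ (h_word u @ h_word v) @ ([E a, E 0] @ h_word u))
     ((h_word u @ [E 0] @ h_word u @ h_word v @ [E a]) @ (h_word v @ h_word u) @ ([E 0] @ h_word u))"
    using pres_eq_ctx[OF pres_eq.sym[OF i2], of "h_word u @ [E 0] @ h_word u @ h_word v @ [E a]" "[E 0] @ h_word u"] by simp
  also have "ceq ((h_word u @ [E 0] @ h_word u @ h_word v @ [E a]) @ (h_word v @ h_word u) @ ([E 0] @ h_word u))
     ([] @ [E (u^2*0)] @ (h_word v @ [E a] @ h_word v @ h_word u @ [E 0] @ h_word u))"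
    using pres_eq_ctx[OF R3[OF un(1), of 0], of "[]" "h_word v @ [E a] @ h_word v @ h_word u @ [E 0] @ h_word u"] by simp
  also have "ceq ([] @ [E (u^2*0)] @ (h_word v @ [E a] @ h_word v @ h_word u @ [E 0] @ h_word u))
     ([E (u^2*0)] @ [E (v^2*a)] @ (h_word u @ [E 0] @ h_word u))"
    using pres_eq_ctx[OF R3[OF un(2), of a], of "[E (u^2*0)]" "h_word u @ [E 0] @ h_word u"] by simp
  also have "ceq ([E (u^2*0)] @ [E (v^2*a)] @ (h_word u @ [E 0] @ h_word u))
     ([E (u^2*0)] @ [E (v^2*a)] @ [E (u^2*0)])"
    using pres_eq_ctx[OF R3[OF un(1), of 0], of "[E (u^2*0)] @ [E (v^2*a)]" "[]"] by simp
  finally show ?thesis by (simp add: hu)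
qed

lemma hzu: assumes uv: "(u::'a::comm_ring_1) * v = 1"
  shows "ceq [E u, E v, E u] (Zw @ [E (-u), E (-v), E (-u)])"
proof -
  have un: "u dvd 1" "v dvd 1" using units_of[OF uv] by auto
  have a: "ceq (h_word (-1) @ h_word u) (h_word (-u))" using R1[OF _ un(1), of "-1"] by simp
  have hmu: "h_word (-u) = [E u, E v, E u]" using hw[of "-u" "-v"] uv by simp
  have "ceq (Zw @ [E (-u), E (-v), E (-u)]) [E u, E v, E u]"
    using a by (simp only: hwm1 hw[OF uv] hmu append.simps)
  thus ?thesis by (rule pres_eq.sym)
qed

lemma C1: assumes uv: "(u::'a::comm_ring_1) * v = 1"
  shows "ceq [E (-u), E (-v), E (-t), E v, E u] (Zw @ [E 0, E (-(v^2)*t), E 0])"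
proof -
  have "ceq ([E (-u), E (-v)] @ [E (-t)] @ [E v, E u])
    ([E (-u), E (-v)] @ ([E (-u)] @ Zw @ [E 0, E (-t)] @ Zw @ [E 0, E u]) @ [E v, E u])"
    by (rule pres_eq_ctx[OF pres_eq.sym[OF Kinv]]) simp
  also have "ceq ([E (-u), E (-v)] @ ([E (-u)] @ Zw @ [E 0, E (-t)] @ Zw @ [E 0, E u]) @ [E v, E u])
     ([E (-u), E (-v), E (-u)] @ ([E 0, E (-t)] @ Zw) @ (Zw @ [E 0, E u, E v, E u]))"
    using pres_eq_ctx[OF D4w[of "[E 0, E (-t)]"], of "[E (-u), E (-v), E (-u)]" "Zw @ [E 0, E u, E v, E u]"] by simp
  also have "ceq ([E (-u), E (-v), E (-u)] @ ([E 0, E (-t)] @ Zw) @ (Zw @ [E 0, E u, E v, E u]))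
     ([E (-u), E (-v), E (-u), E 0, E (-t), E 0] @ [E u, E v, E u])"
    using pres_eq_ctx[OF D2, of "[E (-u), E (-v), E (-u), E 0, E (-t)]" "[E 0, E u, E v, E u]"] by simp
  also have "ceq ([E (-u), E (-v), E (-u), E 0, E (-t), E 0] @ [E u, E v, E u])
     ([E (-u), E (-v), E (-u), E 0, E (-t), E 0] @ Zw @ [E (-u), E (-v), E (-u)])"
    by (rule pres_eq_ctxL[OF hzu[OF uv]])
  also have "ceq ([E (-u), E (-v), E (-u), E 0, E (-t), E 0] @ Zw @ [E (-u), E (-v), E (-u)])
     (Zw @ [E (-u), E (-v), E (-u), E 0, E (-t), E 0] @ [E (-u), E (-v), E (-u)])"
    using pres_eq_ctxR[OF D4w'[of "[E (-u), E (-v), E (-u), E 0, E (-t), E 0]"], of "[E (-u), E (-v), E (-u)]"] by simp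
  also have "ceq (Zw @ [E (-u), E (-v), E (-u), E 0, E (-t), E 0] @ [E (-u), E (-v), E (-u)])
     (Zw @ [E 0, E (v^2 * -t), E 0])"
    using pres_eq_ctxL[OF HC[OF uv, of "-t"], of Zw] by simp
  finally show ?thesis by simp
qed

lemma C2: assumes uv: "(u::'a::comm_ring_1) * v = 1"
  shows "ceq [E u, E v, E t, E (-v), E (-u)] (Zw @ [E 0, E (v^2*t), E 0])"
proof -
  have "ceq ([E u, E v] @ [E t] @ [E (-v), E (-u)])
    ([E u, E v] @ ([E u] @ Zw @ [E 0, E t] @ Zw @ [E 0, E (-u)]) @ [E (-v), E (-u)])"
    by (rule pres_eq_ctx[OF pres_eq.sym[OF Kinv]]) simp
  also have "ceq ([E u, E v] @ ([E u] @ Zw @ [E 0, E t] @ Zw @ [E 0, E (-u)]) @ [E (-v), E (-u)])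
     ([E u, E v, E u] @ ([E 0, E t] @ Zw) @ (Zw @ [E 0, E (-u), E (-v), E (-u)]))"
    using pres_eq_ctx[OF D4w[of "[E 0, E t]"], of "[E u, E v, E u]" "Zw @ [E 0, E (-u), E (-v), E (-u)]"] by simp
  also have "ceq ([E u, E v, E u] @ ([E 0, E t] @ Zw) @ (Zw @ [E 0, E (-u), E (-v), E (-u)]))
     ([E u, E v, E u] @ [E 0, E t, E 0, E (-u), E (-v), E (-u)])"
    using pres_eq_ctx[OF D2, of "[E u, E v, E u, E 0, E t]" "[E 0, E (-u), E (-v), E (-u)]"] by simp
  also have "ceq ([E u, E v, E u] @ [E 0, E t, E 0, E (-u), E (-v), E (-u)])
     ((Zw @ [E (-u), E (-v), E (-u)]) @ [E 0, E t, E 0, E (-u), E (-v), E (-u)])"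
    by (rule pres_eq_ctxR[OF hzu[OF uv]])
  also have "ceq ((Zw @ [E (-u), E (-v), E (-u)]) @ [E 0, E t, E 0, E (-u), E (-v), E (-u)])
     (Zw @ [E 0, E (v^2 * t), E 0])"
    using pres_eq_ctxL[OF HC[OF uv, of "t"], of Zw] by simp
  finally show ?thesis by simp
qed

lemma T3: assumes uv: "(u::'a::comm_ring_1) * v = 1"
  shows "ceq (Ybw u @ Yw (-v) @ Ybw u @ Ybw t @ Ybw (-u) @ Yw v @ Ybw (-u)) (Yw (-(v^2)*t))"
proof -
  have y3: "ceq (Ybw u @ Ybw t @ Ybw (-u)) (Ybw t)"
  proof -
    have "ceq ((Ybw u @ Ybw t) @ Ybw (-u)) (Ybw (u+t) @ Ybw (-u))" by (rule pres_eq_ctxR[OF T2]) simp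
    also have "ceq (Ybw (u+t) @ Ybw (-u)) (Ybw t)" by (rule T2) simp
    finally show ?thesis by simp
  qed
  have "ceq ((Ybw u @ Yw (-v)) @ (Ybw u @ Ybw t @ Ybw (-u)) @ (Yw v @ Ybw (-u)))
            ((Ybw u @ Yw (-v)) @ Ybw t @ (Yw v @ Ybw (-u)))"
    by (rule pres_eq_ctx[OF y3])
  also have "ceq ((Ybw u @ Yw (-v)) @ Ybw t @ (Yw v @ Ybw (-u)))
     ([E (-u), E 0, E 0] @ [] @ [E (-v), E (-t), E 0, E 0, E 0, E 0, E 0, E 0, E v, E u, E 0, E 0, E 0])"
    using pres_eq_ctx[OF D6, of "[E (-u), E 0, E 0]" "[E (-v), E (-t), E 0, E 0, E 0, E 0, E 0, E 0, E v, E u, E 0, E 0, E 0]"] by simp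
  also have "ceq ([E (-u), E 0, E 0] @ [] @ [E (-v), E (-t), E 0, E 0, E 0, E 0, E 0, E 0, E v, E u, E 0, E 0, E 0])
     ([E (-u), E 0, E 0, E (-v), E (-t), E 0, E 0] @ [] @ [E v, E u, E 0, E 0, E 0])"
    using pres_eq_ctx[OF D6, of "[E (-u), E 0, E 0, E (-v), E (-t), E 0, E 0]" "[E v, E u, E 0, E 0, E 0]"] by simp
  also have "ceq ([E (-u), E 0, E 0, E (-v), E (-t), E 0, E 0] @ [] @ [E v, E u, E 0, E 0, E 0])
     ([E (-u)] @ Zw @ [E (-v), E (-t), E 0, E 0, E v, E u, E 0, E 0, E 0])"
    using pres_eq_ctx[OF D5, of "[E (-u)]" "[E (-v), E (-t), E 0, E 0, E v, E u, E 0, E 0, E 0]"] by simp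
  also have "ceq ([E (-u)] @ Zw @ [E (-v), E (-t), E 0, E 0, E v, E u, E 0, E 0, E 0])
     (([E (-u)] @ Zw @ [E (-v), E (-t)]) @ Zw @ [E v, E u, E 0, E 0, E 0])"
    using pres_eq_ctx[OF D5, of "[E (-u)] @ Zw @ [E (-v), E (-t)]" "[E v, E u, E 0, E 0, E 0]"] by simp
  also have "ceq (([E (-u)] @ Zw @ [E (-v), E (-t)]) @ Zw @ [E v, E u, E 0, E 0, E 0])
     ([E (-u)] @ ([E (-v), E (-t)] @ Zw) @ (Zw @ [E v, E u, E 0, E 0, E 0]))"
    using pres_eq_ctx[OF D4w[of "[E (-v), E (-t)]"], of "[E (-u)]" "Zw @ [E v, E u, E 0, E 0, E 0]"] by simp
  also have "ceq ([E (-u)] @ ([E (-v), E (-t)] @ Zw) @ (Zw @ [E v, E u, E 0, E 0, E 0]))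
     ([E (-u), E (-v), E (-t), E v, E u] @ [E 0, E 0, E 0])"
    using pres_eq_ctx[OF D2, of "[E (-u), E (-v), E (-t)]" "[E v, E u, E 0, E 0, E 0]"] by simp
  also have "ceq ([E (-u), E (-v), E (-t), E v, E u] @ [E 0, E 0, E 0])
     ((Zw @ [E 0, E (-(v^2)*t), E 0]) @ [E 0, E 0, E 0])"
    by (rule pres_eq_ctxR[OF C1[OF uv]])
  also have "ceq ((Zw @ [E 0, E (-(v^2)*t), E 0]) @ [E 0, E 0, E 0])
     ((Zw @ [E 0, E (-(v^2)*t)]) @ [] @ [])"
    using pres_eq_ctx[OF D6, of "Zw @ [E 0, E (-(v^2)*t)]" "[]"] by simp
  also have "ceq ((Zw @ [E 0, E (-(v^2)*t)]) @ [] @ []) ([] @ [E 0, E 0] @ [E 0, E (-(v^2)*t)])"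
    using pres_eq_ctx[OF pres_eq.sym[OF D5], of "[]" "[E 0, E (-(v^2)*t)]"] by simp
  finally show ?thesis by simp
qed

lemma T4: assumes uv: "(u::'a::comm_ring_1) * v = 1"
  shows "ceq (Yw u @ Ybw (-v) @ Yw u @ Yw t @ Yw (-u) @ Ybw v @ Yw (-u)) (Ybw (-(v^2)*t))"
proof -
  have y3: "ceq (Yw u @ Yw t @ Yw (-u)) (Yw t)"
  proof -
    have "ceq ((Yw u @ Yw t) @ Yw (-u)) (Yw (u+t) @ Yw (-u))" by (rule pres_eq_ctxR[OF T1]) simp
    also have "ceq (Yw (u+t) @ Yw (-u)) (Yw t)" by (rule T1) simp
    finally show ?thesis by simp
  qed
  have "ceq ((Yw u @ Ybw (-v)) @ (Yw u @ Yw t @ Yw (-u)) @ (Ybw v @ Yw (-u)))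
            ((Yw u @ Ybw (-v)) @ Yw t @ (Ybw v @ Yw (-u)))"
    by (rule pres_eq_ctx[OF y3])
  also have "ceq ((Yw u @ Ybw (-v)) @ Yw t @ (Ybw v @ Yw (-u)))
     ([E 0, E 0, E 0, E u, E v, E 0, E 0] @ [] @ [E t, E (-v), E 0, E 0, E 0, E 0, E 0, E 0, E (-u)])"
    using pres_eq_ctx[OF D6, of "[E 0, E 0, E 0, E u, E v, E 0, E 0]" "[E t, E (-v), E 0, E 0, E 0, E 0, E 0, E 0, E (-u)]"] by simp
  also have "ceq ([E 0, E 0, E 0, E u, E v, E 0, E 0] @ [] @ [E t, E (-v), E 0, E 0, E 0, E 0, E 0, E 0, E (-u)])
     ([E 0, E 0, E 0, E u, E v, E 0, E 0, E t, E (-v), E 0, E 0] @ [] @ [E (-u)])"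
    using pres_eq_ctx[OF D6, of "[E 0, E 0, E 0, E u, E v, E 0, E 0, E t, E (-v), E 0, E 0]" "[E (-u)]"] by simp
  also have "ceq ([E 0, E 0, E 0, E u, E v, E 0, E 0, E t, E (-v), E 0, E 0] @ [] @ [E (-u)])
     ([E 0, E 0, E 0, E u, E v] @ Zw @ [E t, E (-v), E 0, E 0, E (-u)])"
    using pres_eq_ctx[OF D5, of "[E 0, E 0, E 0, E u, E v]" "[E t, E (-v), E 0, E 0, E (-u)]"] by simp
  also have "ceq ([E 0, E 0, E 0, E u, E v] @ Zw @ [E t, E (-v), E 0, E 0, E (-u)])
     (([E 0, E 0, E 0, E u, E v] @ Zw @ [E t, E (-v)]) @ Zw @ [E (-u)])"
    using pres_eq_ctx[OF D5, of "[E 0, E 0, E 0, E u, E v] @ Zw @ [E t, E (-v)]" "[E (-u)]"] by simp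
  also have "ceq (([E 0, E 0, E 0, E u, E v] @ Zw @ [E t, E (-v)]) @ Zw @ [E (-u)])
     ([E 0, E 0, E 0, E u, E v] @ ([E t, E (-v)] @ Zw) @ (Zw @ [E (-u)]))"
    using pres_eq_ctx[OF D4w[of "[E t, E (-v)]"], of "[E 0, E 0, E 0, E u, E v]" "Zw @ [E (-u)]"] by simp
  also have "ceq ([E 0, E 0, E 0, E u, E v] @ ([E t, E (-v)] @ Zw) @ (Zw @ [E (-u)]))
     ([E 0, E 0, E 0] @ [E u, E v, E t, E (-v), E (-u)])"
    using pres_eq_ctx[OF D2, of "[E 0, E 0, E 0, E u, E v, E t, E (-v)]" "[E (-u)]"] by simp
  also have "ceq ([E 0, E 0, E 0] @ [E u, E v, E t, E (-v), E (-u)])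
     (([E 0, E 0, E 0] @ Zw) @ [E 0, E (v^2*t), E 0])"
    using pres_eq_ctxL[OF C2[OF uv], of "[E 0, E 0, E 0]"] by simp
  also have "ceq (([E 0, E 0, E 0] @ Zw) @ [E 0, E (v^2*t), E 0])
     ((Zw @ [E 0, E 0, E 0]) @ [E 0, E (v^2*t), E 0])"
    by (rule pres_eq_ctxR[OF D4w']) simp
  also have "ceq ((Zw @ [E 0, E 0, E 0]) @ [E 0, E (v^2*t), E 0]) (Zw @ [] @ [E (v^2*t), E 0])"
    using pres_eq_ctx[OF D6, of Zw "[E (v^2*t), E 0]"] by simp
  also have "ceq (Zw @ [] @ [E (v^2*t), E 0]) ([E (v^2*t)] @ Zw @ [E 0])"
    using pres_eq_ctxR[OF D4w'[of "[E (v^2*t)]"], of "[E 0]"] by (simp add: pres_eq.sym)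
  also have "ceq ([E (v^2*t)] @ Zw @ [E 0]) ([E (v^2*t)] @ [E 0, E 0] @ [E 0])"
    using pres_eq_ctx[OF pres_eq.sym[OF D5], of "[E (v^2*t)]" "[E 0]"] by simp
  finally show ?thesis by simp
qed



lemma mm[simp]: "mat2_mult (a, b, c, d) (e, f, g, h) = (a * e + b * g, a * f + b * h, c * e + d * g, c * f + d * h)"
  by (simp add: mat2_mult_def)

lemma SL2_simps[simp]: "carrier (SL2 TYPE('a::comm_ring_1)) = {(a, b, c, d). a * d - b * c = 1}"
  "mult (SL2 TYPE('a)) = mat2_mult" "one (SL2 TYPE('a)) = (1, 0, 0, 1)"
  by (simp_all add: SL2_def)

lemma group_SL2: "group (SL2 TYPE('a::comm_ring_1))"
proof (rule groupI)
  fix x y :: "'a mat2" assume "x \<in> carrier (SL2 TYPE('a))" "y \<in> carrier (SL2 TYPE('a))"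
  moreover obtain a b c d where xd: "x = (a, b, c, d)" by (cases x) auto
  moreover obtain e f g h where yd: "y = (e, f, g, h)" by (cases y) auto
  moreover have "(a*e+b*g)*(c*f+d*h) - (a*f+b*h)*(c*e+d*g) = (a*d-b*c)*(e*h-f*g)"
    by (simp add: algebra_simps)
  ultimately show "x \<otimes>\<^bsub>SL2 TYPE('a)\<^esub> y \<in> carrier (SL2 TYPE('a))"
    by simp
next
  show "\<one>\<^bsub>SL2 TYPE('a)\<^esub> \<in> carrier (SL2 TYPE('a))" by simp
next
  fix x y z :: "'a mat2"
  show "x \<otimes>\<^bsub>SL2 TYPE('a)\<^esub> y \<otimes>\<^bsub>SL2 TYPE('a)\<^esub> z =
        x \<otimes>\<^bsub>SL2 TYPE('a)\<^esub> (y \<otimes>\<^bsub>SL2 TYPE('a)\<^esub> z)"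
    by (cases x; cases y; cases z) (simp add: algebra_simps)
next
  fix x :: "'a mat2"
  show "\<one>\<^bsub>SL2 TYPE('a)\<^esub> \<otimes>\<^bsub>SL2 TYPE('a)\<^esub> x = x" by (cases x) simp
next
  fix x :: "'a mat2" assume x: "x \<in> carrier (SL2 TYPE('a))"
  obtain a b c d where xd: "x = (a, b, c, d)" by (cases x) auto
  have "(d, -b, -c, a) \<in> carrier (SL2 TYPE('a))" "(d, -b, -c, a) \<otimes>\<^bsub>SL2 TYPE('a)\<^esub> x = \<one>\<^bsub>SL2 TYPE('a)\<^esub>"
    using x by (auto simp: xd algebra_simps)
  thus "\<exists>y\<in>carrier (SL2 TYPE('a)). y \<otimes>\<^bsub>SL2 TYPE('a)\<^esub> x = \<one>\<^bsub>SL2 TYPE('a)\<^esub>" by blast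
qed

definition psig :: "'a::comm_ring_1 \<Rightarrow> 'a mat2" where "psig a = (a, 1, -1, 0)"

lemma psig_simp: "psig a = (a, 1, -1, 0)" by (simp add: psig_def)

lemma evC: "eval_word (SL2 TYPE('a::comm_ring_1)) psig ((a, True) # w) = mat2_mult (a, 1, -1, 0) (eval_word (SL2 TYPE('a)) psig w)"
  by (simp add: psig_def)

lemma psig_carrier: "psig a \<in> carrier (SL2 TYPE('a::comm_ring_1))"
  by (simp add: psig_def)

lemmas evA = eval_word_append[OF group_SL2 psig_carrier]

lemma ev1: "eval_word (SL2 TYPE('a::comm_ring_1)) psig [E a] = (a, 1, -1, 0)"
  by (simp add: psig_def)

lemma evh: "(u::'a::comm_ring_1) * v = 1 \<Longrightarrow> eval_word (SL2 TYPE('a)) psig (h_word u) = (u, 0, 0, v)"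
  by (simp add: hw psig_def algebra_simps)

lemma C_rels_SL2: "(l, r) \<in> C_rels \<Longrightarrow> eval_word (SL2 TYPE('a::comm_ring_1)) psig l = eval_word (SL2 TYPE('a)) psig r"
proof (unfold C_rels_def, elim UnE CollectE exE conjE)
  fix u v :: 'a assume lr: "(l, r) = (h_word u @ h_word v, h_word (u * v))" and uv: "u dvd 1" "v dvd 1"
  have a: "u * unit_inv u = 1" "v * unit_inv v = 1" using uv unit_inv by auto
  hence b: "(u*v) * (unit_inv u * unit_inv v) = 1" by (metis mult.assoc mult.left_commute mult_1_right)
  show ?thesis using lr by (simp add: evA evh[OF a(1)] evh[OF a(2)] evh[OF b])
next
  fix a b :: 'a assume lr: "(l, r) = (eps a @ eps 0 @ eps b, h_word (- 1) @ eps (a + b))"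
  have h: "eval_word (SL2 TYPE('a)) psig (h_word (-1)) = (-1, 0, 0, -1)" using evh[of "-1::'a" "-1"] by simp
  show ?thesis using lr by (simp add: evA h eps_def) (simp add: psig_simp algebra_simps)
next
  fix u a :: 'a assume lr: "(l, r) = (h_word u @ eps a @ h_word u, eps (u\<^sup>2 * a))" and uv: "u dvd 1"
  have a: "u * unit_inv u = 1" using uv unit_inv by auto
  have a': "unit_inv u * u = 1" using a by (simp add: mult.commute)
  show ?thesis using lr by (simp add: evA evh[OF a] eps_def power2_eq_square) (simp add: psig_simp a a' algebra_simps)
qed



fun tau :: "'a::comm_ring_1 stgen \<Rightarrow> 'a word" where
  "tau (X12 a) = Ybw a"
| "tau (X21 a) = Yw a"

definition fa :: "'a::comm_ring_1 stgen \<Rightarrow> 'a word set" where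
  "fa g = pres_class C_rels (tau g)"

lemma C_grp_eq: "C_grp TYPE('a::comm_ring_1) = presented_group C_rels"
  by (simp add: C_grp_def)

lemma group_C: "group (C_grp TYPE('a::comm_ring_1))"
  by (simp add: C_grp_eq group_pg)

lemma fa_carrier: "fa g \<in> carrier (C_grp TYPE('a::comm_ring_1))"
  by (simp add: fa_def C_grp_eq pg_carrier)

lemma eval_pos: "(\<forall>x\<in>set w. snd x) \<Longrightarrow>
  eval_word (C_grp TYPE('a::comm_ring_1)) fa w = pres_class C_rels (concat (map (tau \<circ> fst) w))"
proof (induction w)
  case Nil thus ?case by (simp add: C_grp_eq pg_one)
next
  case (Cons x w)
  obtain g b where x: "x = (g, b)" by force
  with Cons have b: b by simp
  show ?case using Cons b by (simp add: x C_grp_eq fa_def pg_mult)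
qed

lemma St_ok: "(l, r) \<in> St_rels \<Longrightarrow>
  eval_word (C_grp TYPE('a::comm_ring_1)) fa l = eval_word (C_grp TYPE('a)) fa r"
proof (unfold St_rels_def, elim UnE CollectE exE conjE)
  fix ij and s t :: 'a assume lr: "(l, r) = (xw ij s @ xw ij t, xw ij (s + t))"
  have "ceq (concat (map (tau \<circ> fst) l)) (concat (map (tau \<circ> fst) r))"
    using lr T1[of s t "s+t"] T2[of s t "s+t"] by (cases ij) (auto simp: xw_def)
  moreover have "\<forall>x\<in>set l. snd x" "\<forall>x\<in>set r. snd x" using lr by (auto simp: xw_def)
  ultimately show ?thesis by (simp add: eval_pos class_eq)
next
  fix ij and u t :: 'a assume lr: "(l, r) = (ww ij u @ xw ij t @ ww ij (- u), xw (\<not> ij) (- (unit_inv u)\<^sup>2 * t))"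
    and u: "u dvd 1"
  define v where "v = unit_inv u"
  have uv: "u * v = 1" using unit_inv[OF u] by (simp add: v_def)
  have mv: "unit_inv (-u) = -v" by (rule unit_inv_unique) (simp add: uv)
  have "ceq (concat (map (tau \<circ> fst) l)) (concat (map (tau \<circ> fst) r))"
  proof (cases ij)
    case True thus ?thesis using lr T3[OF uv, of t] by (simp add: xw_def ww_def mv v_def[symmetric])
  next
    case False thus ?thesis using lr T4[OF uv, of t] by (simp add: xw_def ww_def mv v_def[symmetric])
  qed
  moreover have "\<forall>x\<in>set l. snd x" "\<forall>x\<in>set r. snd x" using lr by (auto simp: xw_def ww_def)
  ultimately show ?thesis by (simp add: eval_pos class_eq)
qed

lemma psi_eq: "psi = pres_lift (SL2 TYPE('a::comm_ring_1)) psig"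
  by (simp add: psi_def psig_def[abs_def])

lemma psi_class: "psi (pres_class C_rels w) = eval_word (SL2 TYPE('a::comm_ring_1)) psig w"
  unfolding psi_eq by (rule pres_lift_class[OF group_SL2 psig_carrier C_rels_SL2])

lemma psi_hom: "group_hom (C_grp TYPE('a::comm_ring_1)) (SL2 TYPE('a)) psi"
  by (rule group_hom.intro[OF group_C group_SL2], rule group_hom_axioms.intro)
     (simp add: psi_eq C_grp_eq pres_lift_hom[OF group_SL2 psig_carrier C_rels_SL2])

lemma psi_fa: "psi \<circ> fa = (\<lambda>g. case g of X12 t \<Rightarrow> (1, t, 0, 1) | X21 t \<Rightarrow> (1::'a::comm_ring_1, 0, t, 1))"
proof
  fix g :: "'a stgen"
  show "(psi \<circ> fa) g = (case g of X12 t \<Rightarrow> (1, t, 0, 1) | X21 t \<Rightarrow> (1, 0, t, 1))"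
    by (cases g; simp add: fa_def psi_class; simp add: psig_simp)
qed

theorem propositionA10:
  shows "\<exists>\<alpha>. \<alpha> \<in> hom (St_grp TYPE('a::comm_ring_1)) (C_grp TYPE('a))
            \<and> (\<forall>a. \<alpha> (pres_class St_rels (xw False a)) = y_elt a)
            \<and> (\<forall>a. \<alpha> (pres_class St_rels (xw True a)) = ybar_elt a)
            \<and> (\<forall>g \<in> carrier (St_grp TYPE('a)). psi (\<alpha> g) = phi g)"
proof -
  let ?al = "pres_lift (C_grp TYPE('a)) fa"
  have 1: "?al \<in> hom (St_grp TYPE('a)) (C_grp TYPE('a))"
    unfolding St_grp_def by (rule pres_lift_hom[OF group_C fa_carrier St_ok])
  have 2: "?al (pres_class St_rels (xw False a)) = y_elt a" for a :: 'a
    using eval_pos[of "xw False a"] by (simp add: pres_lift_class[OF group_C fa_carrier St_ok] xw_def y_elt_def eps_def)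
  have 3: "?al (pres_class St_rels (xw True a)) = ybar_elt a" for a :: 'a
    using eval_pos[of "xw True a"] by (simp add: pres_lift_class[OF group_C fa_carrier St_ok] xw_def ybar_elt_def eps_def)
  have 4: "psi (?al g) = phi g" for g
    unfolding pres_lift_def phi_def
    by (simp add: hom_eval[OF psi_hom fa_carrier] psi_fa)
  show ?thesis using 1 2 3 4 by blast
qed

end
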